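(* Let $\mathcal A\in\mathbb R^{n_1}\otimes\cdots\otimes\mathbb R^{n_k}$, $1\le s\le k$ and $r\le\min\{n_1,\dots,n_s\}$. Consider problem (LRPOTA): minimize $\|\mathcal A-(U^{(1)},\dots,U^{(k)})\cdot\mathcal D\|^2$ over $\mathcal D=\operatorname{diag}_k(\lambda_1,\dots,\lambda_r)$, $\lambda_j\in\mathbb R$, $(U^{(i)})^{\mathsf T}U^{(i)}=I_r$ for $i=1,\dots,s$, $U^{(i)}\in\mathrm B(r,n_i)$ for $i=s+1,\dots,k$; and problem (mLRPOTA): maximize $\sum_{j=1}^r\big(((U^{(1)})^{\mathsf T},\dots,(U^{(k)})^{\mathsf T})\cdot\mathcal A\big)_{j\cdots j}^2$ subject to the same constraints on $U=(U^{(1)},\dots,U^{(k)})$. Then: (i) if $(\widehat U,\widehat{\mathcal D})$ with $\widehat{\mathcal D}=\operatorname{diag}_k(\widehat\lambda_1,\dots,\widehat\lambda_r)$ is an optimizer of (LRPOTA), then $\widehat U$ is an optimizer of (mLRPOTA), and the optimal values are respectively $\|\mathcal A\|^2-\sum_j\widehat\lambda_j^2$ and $\sum_j\widehat\lambda_j^2$; (ii) conversely, if $\widehat U$ is an optimizer of (mLRPOTA), then $(\widehat U,\widehat{\mathcal D})$ with $\widehat{\mathcal D}=\operatorname{diag}_k\circ\operatorname{Diag}_k\big(((\widehat U^{(1)})^{\mathsf T},\dots,(\widehat U^{(k)})^{\mathsf T})\cdot\mathcal A\big)$ is an optimizer of (LRPOTA).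
   Context: $\mathrm B(r,n)$ is the set of $n\times r$ real matrices with unit-norm columns. For matrices $B^{(i)}\in\mathbb R^{m_i\times n_i}$ and a tensor $\mathcal A$, $(B^{(1)},\dots,B^{(k)})\cdot\mathcal A$ is the tensor with entries $\sum_{j_1,\dots,j_k}b^{(1)}_{i_1j_1}\cdots b^{(k)}_{i_kj_k}a_{j_1\dots j_k}$. $\operatorname{diag}_k(\lambda)\in(\mathbb R^r)^{\otimes k}$ is the diagonal tensor with diagonal entries $\lambda_1,\dots,\lambda_r$, and $\operatorname{Diag}_k$ extracts the diagonal $(a_{i\cdots i})_{i=1}^r$ of a tensor in $(\mathbb R^r)^{\otimes k}$. The norm is the Hilbert–Schmidt (Frobenius) norm. *)

theory Defs
  imports Complex_Main
begin

text \<open>Order-k real tensors in R^{d_1} (x) ... (x) R^{d_k} are represented as functions on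
  multi-indices (nat \<Rightarrow> nat); the relevant multi-indices are those with I i < d i for i < k
  and I i = 0 for i \<ge> k (0-based indexing). Matrices are functions row \<Rightarrow> column \<Rightarrow> entry.\<close>

type_synonym tensor = "(nat \<Rightarrow> nat) \<Rightarrow> real"
type_synonym mat = "nat \<Rightarrow> nat \<Rightarrow> real"

definition idx :: "(nat \<Rightarrow> nat) \<Rightarrow> nat \<Rightarrow> (nat \<Rightarrow> nat) set" where
  "idx d k = {I. \<forall>i. (i < k \<longrightarrow> I i < d i) \<and> (k \<le> i \<longrightarrow> I i = 0)}"

definition hs_norm2 :: "(nat \<Rightarrow> nat) \<Rightarrow> nat \<Rightarrow> tensor \<Rightarrow> real" where
  "hs_norm2 d k A = (\<Sum>I\<in>idx d k. (A I)\<^sup>2)"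

definition mlmul :: "(nat \<Rightarrow> mat) \<Rightarrow> (nat \<Rightarrow> nat) \<Rightarrow> (nat \<Rightarrow> nat) \<Rightarrow> nat \<Rightarrow> tensor \<Rightarrow> tensor" where
  "mlmul B m d k A = (\<lambda>I. if I \<in> idx m k
      then (\<Sum>J\<in>idx d k. (\<Prod>i<k. B i (I i) (J i)) * A J) else 0)"

definition diag_idx :: "nat \<Rightarrow> nat \<Rightarrow> (nat \<Rightarrow> nat)" where
  "diag_idx k j = (\<lambda>i. if i < k then j else 0)"

definition diagT :: "nat \<Rightarrow> nat \<Rightarrow> (nat \<Rightarrow> real) \<Rightarrow> tensor" where
  "diagT r k lam = (\<lambda>J. if J \<in> idx (\<lambda>_. r) k \<and> J = diag_idx k (J 0) then lam (J 0) else 0)"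

definition DiagT :: "nat \<Rightarrow> tensor \<Rightarrow> (nat \<Rightarrow> real)" where
  "DiagT k T = (\<lambda>j. T (diag_idx k j))"

definition transpose_factors :: "(nat \<Rightarrow> mat) \<Rightarrow> (nat \<Rightarrow> mat)" where
  "transpose_factors U = (\<lambda>i a b. U i b a)"

definition orth_cols :: "nat \<Rightarrow> nat \<Rightarrow> mat \<Rightarrow> bool" where
  "orth_cols n r M = (\<forall>j<r. \<forall>j'<r. (\<Sum>a<n. M a j * M a j') = (if j = j' then 1 else 0))"

definition unit_cols :: "nat \<Rightarrow> nat \<Rightarrow> mat \<Rightarrow> bool" where
  "unit_cols n r M = (\<forall>j<r. (\<Sum>a<n. (M a j)\<^sup>2) = 1)"

text \<open>Feasible set of (LRPOTA)/(mLRPOTA); factor i (0-based) is n_i x r.\<close>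
definition feasible :: "(nat \<Rightarrow> nat) \<Rightarrow> nat \<Rightarrow> nat \<Rightarrow> nat \<Rightarrow> (nat \<Rightarrow> mat) \<Rightarrow> bool" where
  "feasible n k s r U = ((\<forall>i<s. orth_cols (n i) r (U i)) \<and> (\<forall>i. s \<le> i \<and> i < k \<longrightarrow> unit_cols (n i) r (U i)))"

definition lrpota_obj :: "tensor \<Rightarrow> (nat \<Rightarrow> nat) \<Rightarrow> nat \<Rightarrow> nat \<Rightarrow> (nat \<Rightarrow> mat) \<Rightarrow> (nat \<Rightarrow> real) \<Rightarrow> real" where
  "lrpota_obj A n k r U lam =
     hs_norm2 n k (\<lambda>I. A I - mlmul U n (\<lambda>_. r) k (diagT r k lam) I)"

definition mlrpota_obj :: "tensor \<Rightarrow> (nat \<Rightarrow> nat) \<Rightarrow> nat \<Rightarrow> nat \<Rightarrow> (nat \<Rightarrow> mat) \<Rightarrow> real" where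
  "mlrpota_obj A n k r U =
     (\<Sum>j<r. (mlmul (transpose_factors U) (\<lambda>_. r) n k A (diag_idx k j))\<^sup>2)"

definition lrpota_optimizer :: "tensor \<Rightarrow> (nat \<Rightarrow> nat) \<Rightarrow> nat \<Rightarrow> nat \<Rightarrow> nat \<Rightarrow> (nat \<Rightarrow> mat) \<Rightarrow> (nat \<Rightarrow> real) \<Rightarrow> bool" where
  "lrpota_optimizer A n k s r U lam =
     (feasible n k s r U \<and>
      (\<forall>U' lam'. feasible n k s r U' \<longrightarrow> lrpota_obj A n k r U lam \<le> lrpota_obj A n k r U' lam'))"

definition mlrpota_optimizer :: "tensor \<Rightarrow> (nat \<Rightarrow> nat) \<Rightarrow> nat \<Rightarrow> nat \<Rightarrow> nat \<Rightarrow> (nat \<Rightarrow> mat) \<Rightarrow> bool" where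
  "mlrpota_optimizer A n k s r U =
     (feasible n k s r U \<and>
      (\<forall>U'. feasible n k s r U' \<longrightarrow> mlrpota_obj A n k r U' \<le> mlrpota_obj A n k r U))"

end

theory Submission
  imports Defs
begin

lemma idx_0: "idx d 0 = {\<lambda>_. 0}"
  unfolding idx_def by auto

lemma idx_Suc: "idx d (Suc k) = (\<lambda>(I,a). I(k:=a)) ` (idx d k \<times> {..<d k})"
proof
  show "idx d (Suc k) \<subseteq> (\<lambda>(I,a). I(k:=a)) ` (idx d k \<times> {..<d k})"
  proof
    fix J assume J: "J \<in> idx d (Suc k)"
    have "J = (\<lambda>(I,a). I(k:=a)) (J(k:=0), J k)" by simp
    moreover have "(J(k:=0), J k) \<in> idx d k \<times> {..<d k}"
      using J unfolding idx_def by auto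
    ultimately show "J \<in> (\<lambda>(I,a). I(k:=a)) ` (idx d k \<times> {..<d k})" by blast
  qed
next
  show "(\<lambda>(I,a). I(k:=a)) ` (idx d k \<times> {..<d k}) \<subseteq> idx d (Suc k)"
    unfolding idx_def by auto
qed

lemma inj_idx_Suc: "inj_on (\<lambda>(I,a). I(k:=a)) (idx d k \<times> {..<d k})"
proof (rule inj_onI, clarsimp)
  fix I a I' a'
  assume I: "I \<in> idx d k" and I': "I' \<in> idx d k" and e: "I(k := a) = I'(k := a')"
  have "a = a'" using fun_cong[OF e, of k] by simp
  moreover have "I = I'"
  proof
    fix i show "I i = I' i"
    proof (cases "i = k")
      case True thus ?thesis using I I' unfolding idx_def by auto
    next
      case False thus ?thesis using fun_cong[OF e, of i] by simp
    qed
  qed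
  ultimately show "I = I' \<and> a = a'" by simp
qed

lemma finite_idx: "finite (idx d k)"
  by (induction k) (simp_all add: idx_0 idx_Suc)

lemma sum_prod_idx:
  "(\<Sum>I\<in>idx d k. \<Prod>i<k. f i (I i)) = (\<Prod>i<k. \<Sum>a<d i. f i (a::nat) :: real)"
proof (induction k)
  case 0 thus ?case by (simp add: idx_0)
next
  case (Suc k)
  have "(\<Sum>I\<in>idx d (Suc k). \<Prod>i<Suc k. f i (I i))
      = (\<Sum>p\<in>idx d k \<times> {..<d k}. \<Prod>i<Suc k. f i (((\<lambda>(I,a). I(k:=a)) p) i))"
    unfolding idx_Suc by (subst sum.reindex[OF inj_idx_Suc]) (simp add: comp_def)
  also have "\<dots> = (\<Sum>p\<in>idx d k \<times> {..<d k}. (\<Prod>i<k. f i (fst p i)) * f k (snd p))"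
    by (rule sum.cong) (auto intro!: prod.cong)
  also have "\<dots> = (\<Sum>I\<in>idx d k. \<Sum>a<d k. (\<Prod>i<k. f i (I i)) * f k a)"
    by (subst sum.cartesian_product) (simp add: case_prod_beta)
  also have "\<dots> = (\<Sum>I\<in>idx d k. \<Prod>i<k. f i (I i)) * (\<Sum>a<d k. f k a)"
    by (simp add: sum_product)
  finally show ?case using Suc by simp
qed

lemma diag_idx_in: "j < r \<Longrightarrow> diag_idx k j \<in> idx (\<lambda>_. r) k"
  unfolding idx_def diag_idx_def by auto

lemma a_eq:
  assumes "j < r"
  shows "mlmul (transpose_factors U) (\<lambda>_. r) n k A (diag_idx k j)
       = (\<Sum>J\<in>idx n k. (\<Prod>i<k. U i (J i) j) * A J)"
  unfolding mlmul_def transpose_factors_def using diag_idx_in[OF assms]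
  by (auto intro!: sum.cong prod.cong simp: diag_idx_def)

lemma recon:
  assumes k: "1 \<le> k"
  shows "mlmul U n (\<lambda>_. r) k (diagT r k lam) I
       = (if I \<in> idx n k then (\<Sum>j<r. lam j * (\<Prod>i<k. U i (I i) j)) else 0)"
proof (cases "I \<in> idx n k")
  case False thus ?thesis unfolding mlmul_def by simp
next
  case True
  let ?g = "\<lambda>J. (\<Prod>i<k. U i (I i) (J i)) * diagT r k lam J"
  have d0: "diag_idx k j 0 = j" for j using k by (simp add: diag_idx_def)
  have inj: "inj_on (diag_idx k) {..<r}"
    by (rule inj_onI) (metis d0)
  have sub: "diag_idx k ` {..<r} \<subseteq> idx (\<lambda>_. r) k" using diag_idx_in by auto
  have "(\<Sum>J\<in>idx (\<lambda>_. r) k. ?g J) = (\<Sum>J\<in>diag_idx k ` {..<r}. ?g J)"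
  proof (rule sum.mono_neutral_right[OF finite_idx sub], rule ballI)
    fix J assume J: "J \<in> idx (\<lambda>_. r) k - diag_idx k ` {..<r}"
    have "diagT r k lam J = 0"
    proof (rule ccontr)
      assume "diagT r k lam J \<noteq> 0"
      hence "J \<in> idx (\<lambda>_. r) k" "J = diag_idx k (J 0)" unfolding diagT_def by (auto split: if_splits)
      moreover have "J 0 < r" using \<open>J \<in> idx (\<lambda>_. r) k\<close> k unfolding idx_def by auto
      ultimately show False using J by blast
    qed
    thus "?g J = 0" by simp
  qed
  also have "\<dots> = (\<Sum>j<r. ?g (diag_idx k j))"
    by (simp add: sum.reindex[OF inj])
  also have "\<dots> = (\<Sum>j<r. lam j * (\<Prod>i<k. U i (I i) j))"
  proof (rule sum.cong[OF refl])
    fix j assume j: "j \<in> {..<r}"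
    have "diagT r k lam (diag_idx k j) = lam j"
      using diag_idx_in[of j r k] j d0[of j] unfolding diagT_def by auto
    moreover have "(\<Prod>i<k. U i (I i) (diag_idx k j i)) = (\<Prod>i<k. U i (I i) j)"
      by (rule prod.cong) (auto simp: diag_idx_def)
    ultimately show "?g (diag_idx k j) = lam j * (\<Prod>i<k. U i (I i) j)" by simp
  qed
  finally show ?thesis using True unfolding mlmul_def by simp
qed

lemma gram:
  assumes "1 \<le> s" "s \<le> k" "feasible n k s r U" "j < r" "j' < r"
  shows "(\<Sum>I\<in>idx n k. (\<Prod>i<k. U i (I i) j) * (\<Prod>i<k. U i (I i) j'))
       = (if j = j' then 1 else 0)"
proof -
  have "(\<Sum>I\<in>idx n k. (\<Prod>i<k. U i (I i) j) * (\<Prod>i<k. U i (I i) j'))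
      = (\<Sum>I\<in>idx n k. (\<Prod>i<k. U i (I i) j * U i (I i) j'))"
    by (simp add: prod.distrib)
  also have "\<dots> = (\<Prod>i<k. \<Sum>a<n i. U i a j * U i a j')"
    by (rule sum_prod_idx)
  also have "\<dots> = (if j = j' then 1 else 0)"
  proof (cases "j = j'")
    case True
    have "(\<Sum>a<n i. U i a j * U i a j') = 1" if "i < k" for i
    proof (cases "i < s")
      case True
      have "orth_cols (n i) r (U i)" using assms(3) True unfolding feasible_def by blast
      thus ?thesis using assms(4) \<open>j = j'\<close> unfolding orth_cols_def by simp
    next
      case False
      have "unit_cols (n i) r (U i)" using assms(3) False \<open>i < k\<close> unfolding feasible_def by simp
      thus ?thesis using assms(4) \<open>j = j'\<close> unfolding unit_cols_def by (simp add: power2_eq_square)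
    qed
    thus ?thesis using True by simp
  next
    case False
    have "orth_cols (n 0) r (U 0)" using assms(1,3) unfolding feasible_def by simp
    hence z: "(\<Sum>a<n 0. U 0 a j * U 0 a j') = 0"
      using assms(4,5) False unfolding orth_cols_def by simp
    have "0 \<in> {..<k}" using assms by auto
    hence "(\<Prod>i<k. \<Sum>a<n i. U i a j * U i a j') = 0"
      using z by (simp add: prod.remove[of "{..<k}" 0])
    thus ?thesis using False by simp
  qed
  finally show ?thesis .
qed

lemma key:
  assumes s: "1 \<le> s" "s \<le> k" and f: "feasible n k s r U"
  shows "lrpota_obj A n k r U lam = hs_norm2 n k A
     - (\<Sum>j<r. (mlmul (transpose_factors U) (\<lambda>_. r) n k A (diag_idx k j))\<^sup>2)
     + (\<Sum>j<r. (lam j - mlmul (transpose_factors U) (\<lambda>_. r) n k A (diag_idx k j))\<^sup>2)"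
proof -
  define a where "a j = mlmul (transpose_factors U) (\<lambda>_. r) n k A (diag_idx k j)" for j
  define P where "P j I = (\<Prod>i<k. U i (I i) j)" for j I
  define T where "T I = (\<Sum>j<r. lam j * P j I)" for I
  have k: "1 \<le> k" using s by simp
  have obj: "lrpota_obj A n k r U lam = (\<Sum>I\<in>idx n k. (A I - T I)\<^sup>2)"
    unfolding lrpota_obj_def hs_norm2_def using recon[OF k]
    by (auto intro!: sum.cong simp: T_def P_def)
  have h1: "(\<Sum>I\<in>idx n k. (A I - T I)\<^sup>2) = (\<Sum>I\<in>idx n k. (A I)\<^sup>2)
      - 2 * (\<Sum>I\<in>idx n k. A I * T I) + (\<Sum>I\<in>idx n k. (T I)\<^sup>2)"
    by (simp add: power2_diff sum.distrib sum_subtractf sum_distrib_left mult.assoc)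
  have h2: "(\<Sum>I\<in>idx n k. A I * T I) = (\<Sum>j<r. lam j * a j)"
  proof -
    have "(\<Sum>I\<in>idx n k. A I * T I) = (\<Sum>I\<in>idx n k. \<Sum>j<r. lam j * (P j I * A I))"
      unfolding T_def by (simp add: sum_distrib_left mult.commute mult.left_commute)
    also have "\<dots> = (\<Sum>j<r. lam j * (\<Sum>I\<in>idx n k. P j I * A I))"
      by (subst sum.swap) (simp add: sum_distrib_left)
    also have "\<dots> = (\<Sum>j<r. lam j * a j)"
      by (rule sum.cong) (auto simp: a_def a_eq P_def)
    finally show ?thesis .
  qed
  have h3: "(\<Sum>I\<in>idx n k. (T I)\<^sup>2) = (\<Sum>j<r. (lam j)\<^sup>2)"
  proof -
    have "(\<Sum>I\<in>idx n k. (T I)\<^sup>2)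
        = (\<Sum>I\<in>idx n k. \<Sum>j<r. \<Sum>j'<r. lam j * lam j' * (P j I * P j' I))"
      unfolding T_def power2_eq_square sum_product by (simp add: algebra_simps)
    also have "\<dots> = (\<Sum>j<r. \<Sum>j'<r. lam j * lam j' * (\<Sum>I\<in>idx n k. P j I * P j' I))"
      by (subst sum.swap) (simp add: sum.swap[of _ "idx n k"] sum_distrib_left)
    also have "\<dots> = (\<Sum>j<r. \<Sum>j'<r. lam j * lam j' * (if j = j' then 1 else 0))"
      by (intro sum.cong refl) (simp add: P_def gram[OF s f])
    also have "\<dots> = (\<Sum>j<r. (lam j)\<^sup>2)"
      by (simp add: power2_eq_square if_distrib cong: if_cong)
    finally show ?thesis .
  qed
  have h4: "(\<Sum>j<r. (lam j - a j)\<^sup>2) = (\<Sum>j<r. (lam j)\<^sup>2) - 2 * (\<Sum>j<r. lam j * a j) + (\<Sum>j<r. (a j)\<^sup>2)"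
    by (simp add: power2_diff sum.distrib sum_subtractf sum_distrib_left mult.assoc)
  show ?thesis
    unfolding obj h1 h2 h3 a_def[symmetric] hs_norm2_def using h4 by simp
qed

theorem proposition3p5:
  fixes A :: tensor and n :: "nat \<Rightarrow> nat" and k s r :: nat
  assumes "1 \<le> s" and "s \<le> k" and "\<forall>i<s. r \<le> n i"
  shows "(\<forall>U lam. lrpota_optimizer A n k s r U lam \<longrightarrow>
            mlrpota_optimizer A n k s r U \<and>
            lrpota_obj A n k r U lam = hs_norm2 n k A - (\<Sum>j<r. (lam j)\<^sup>2) \<and>
            mlrpota_obj A n k r U = (\<Sum>j<r. (lam j)\<^sup>2))
       \<and> (\<forall>U. mlrpota_optimizer A n k s r U \<longrightarrow>
            lrpota_optimizer A n k s r U
              (DiagT k (mlmul (transpose_factors U) (\<lambda>_. r) n k A)))"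
proof -
  define a where "a U j = mlmul (transpose_factors U) (\<lambda>_. r) n k A (diag_idx k j)" for U j
  have K: "feasible n k s r U \<Longrightarrow> lrpota_obj A n k r U lam = hs_norm2 n k A
     - (\<Sum>j<r. (a U j)\<^sup>2) + (\<Sum>j<r. (lam j - a U j)\<^sup>2)" for U lam
    unfolding a_def by (rule key[OF assms(1,2)])
  have M: "mlrpota_obj A n k r U = (\<Sum>j<r. (a U j)\<^sup>2)" for U
    unfolding mlrpota_obj_def a_def ..
  have D: "DiagT k (mlmul (transpose_factors U) (\<lambda>_. r) n k A) = a U" for U
    unfolding DiagT_def a_def ..
  have KD: "feasible n k s r U \<Longrightarrow> lrpota_obj A n k r U (a U) = hs_norm2 n k A - (\<Sum>j<r. (a U j)\<^sup>2)" for U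
    using K[of U "a U"] by simp
  have nn: "(\<Sum>j<r. (lam j - a U j)\<^sup>2) \<ge> 0" for lam U
    by (intro sum_nonneg) simp
  show ?thesis
  proof (intro conjI allI impI)
    fix U lam assume opt: "lrpota_optimizer A n k s r U lam"
    hence f: "feasible n k s r U" unfolding lrpota_optimizer_def by simp
    have "lrpota_obj A n k r U lam \<le> lrpota_obj A n k r U (a U)"
      using opt f unfolding lrpota_optimizer_def by blast
    hence z: "(\<Sum>j<r. (lam j - a U j)\<^sup>2) = 0" using K[OF f, of lam] KD[OF f] nn[of lam U] by simp
    have eq: "lam j = a U j" if "j < r" for j
      using z sum_nonneg_eq_0_iff[of "{..<r}" "\<lambda>j. (lam j - a U j)\<^sup>2"] that by simp
    have sl: "(\<Sum>j<r. (lam j)\<^sup>2) = (\<Sum>j<r. (a U j)\<^sup>2)" using eq by simp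
    show "lrpota_obj A n k r U lam = hs_norm2 n k A - (\<Sum>j<r. (lam j)\<^sup>2)"
      using K[OF f, of lam] z sl by simp
    show "mlrpota_obj A n k r U = (\<Sum>j<r. (lam j)\<^sup>2)" using M sl by simp
    show "mlrpota_optimizer A n k s r U"
      unfolding mlrpota_optimizer_def
    proof (intro conjI allI impI f)
      fix U' assume f': "feasible n k s r U'"
      have "lrpota_obj A n k r U lam \<le> lrpota_obj A n k r U' (a U')"
        using opt f' unfolding lrpota_optimizer_def by blast
      thus "mlrpota_obj A n k r U' \<le> mlrpota_obj A n k r U"
        using K[OF f, of lam] z sl KD[OF f'] M by simp
    qed
  next
    fix U assume opt: "mlrpota_optimizer A n k s r U"
    hence f: "feasible n k s r U" unfolding mlrpota_optimizer_def by simp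
    show "lrpota_optimizer A n k s r U (DiagT k (mlmul (transpose_factors U) (\<lambda>_. r) n k A))"
      unfolding lrpota_optimizer_def D
    proof (intro conjI allI impI f)
      fix U' lam' assume f': "feasible n k s r U'"
      have "mlrpota_obj A n k r U' \<le> mlrpota_obj A n k r U"
        using opt f' unfolding mlrpota_optimizer_def by blast
      thus "lrpota_obj A n k r U (a U) \<le> lrpota_obj A n k r U' lam'"
        using KD[OF f] K[OF f', of lam'] nn[of lam' U'] M by simp
    qed
  qed
qed

end
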